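(* Let $(\mathfrak S_A,\mathfrak E_A,\epsilon^{\mathfrak S_A})$ and $(\mathfrak S_B,\mathfrak E_B,\epsilon^{\mathfrak S_B})$ be States/Effects Chu spaces, $\Phi\in\mathfrak S_A\widetilde{\otimes}\mathfrak S_B$ and $\mathfrak l_A\in\mathfrak E_A$ with $\Phi(\mathfrak l_A,\mathfrak Y_{\mathfrak E_B})=\bot$. Then for all $\mathfrak l_B,\mathfrak l'_B\in\mathfrak E_B$ with $\mathfrak l_B\sqcap\mathfrak l'_B=\bot_{\mathfrak E_B}$, $$(\Phi(\mathfrak l_A,\mathfrak l_B),\Phi(\mathfrak l_A,\mathfrak l'_B))\in\{(\bot,N),(N,\bot),(\bot,\bot)\}.$$
   Context: The boolean domain is $\mathfrak{B}=\{Y,N,\bot\}$, ordered by $u\le v$ iff $u=\bot$ or $u=v$; nonempty infima $\bigwedge$: $Y$ (resp. $N$) if all members are $Y$ (resp. $N$), else $\bot$. Product $\bullet$: $x\bullet Y=x$, $x\bullet N=N$, $\bot\bullet\bot=\bot$ (commutative); involution $\overline{\bot}=\bot$, $\overline{Y}=N$, $\overline{N}=Y$. A space of states is a poset $(\mathfrak S,\sqsubseteq)$ with bottom $\bot_{\mathfrak S}$ in which every nonempty subset has an infimum. The natural space of effects $\mathfrak E_{\mathfrak S}$ consists of formal symbols $\mathfrak l_{(\sigma,\sigma')}$ ($\sigma,\sigma'$ with no common upper bound), $\mathfrak l_{(\sigma,\cdot)}$, $\mathfrak l_{(\cdot,\sigma)}$, $\mathfrak l_{(\cdot,\cdot)}$,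 with evaluation $\epsilon_{\mathfrak l_{(a,b)}}(\sigma)=Y$ if $a\sqsubseteq\sigma$, $N$ if $b\sqsubseteq\sigma$, $\bot$ otherwise ("$\cdot\sqsubseteq\sigma$" false), ordered by pointwise comparison of evaluations (nonempty infima exist and are pointwise). $\overline{\mathfrak l_{(a,b)}}=\mathfrak l_{(b,a)}$, $\mathfrak Y_{\mathfrak E}=\mathfrak l_{(\bot_{\mathfrak S},\cdot)}$, $\bot_{\mathfrak E}=\mathfrak l_{(\cdot,\cdot)}$ (constantly $\bot$). A States/Effects Chu space $(\mathfrak S,\mathfrak E,\epsilon)$: $\mathfrak E\subseteq\mathfrak E_{\mathfrak S}$ (induced order) such that (i) each $\sigma\ne\bot_{\mathfrak S}$ has some $\sigma'\ne\bot_{\mathfrak S}$ with $\mathfrak l_{(\sigma,\sigma')}\in\mathfrak E$; (ii) $\mathfrak E$ is closed under nonempty infima of $\mathfrak E_{\mathfrak S}$; (iii) closed under bar; (iv) contains $\mathfrak Y_{\mathfrak E},\bot_{\mathfrak E}$. The pure tensor $\sigma_A\widetilde{\otimes}\sigma_B$ is the map $\mathfrak E_A\times\mathfrak E_B\to\mathfrak B$, $(\mathfrak l_A,\mathfrak l_B)\mapsto\epsilon^{\mathfrak S_A}_{\mathfrak l_A}(\sigma_A)\bullet\epsilon^{\mathfrak S_B}_{\mathfrak l_B}(\sigma_B)$; the minimal tensor product $\mathfrak S_A\widetilde{\otimes}\mathfrak S_B$ is the set of pointwise infima of nonempty families of pure tensors. *)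

theory Defs
  imports Main
begin

datatype bdom = BY | BN | BBot

definition binf :: "bdom set \<Rightarrow> bdom" where
  "binf X = (if X = {BY} then BY else if X = {BN} then BN else BBot)"

fun bprod :: "bdom \<Rightarrow> bdom \<Rightarrow> bdom" where
  "bprod x BY = x"
| "bprod x BN = BN"
| "bprod BY BBot = BBot"
| "bprod BN BBot = BN"
| "bprod BBot BBot = BBot"

definition is_inf_of :: "'s set \<Rightarrow> ('s \<Rightarrow> 's \<Rightarrow> bool) \<Rightarrow> 's set \<Rightarrow> 's \<Rightarrow> bool" where
  "is_inf_of S le X m \<longleftrightarrow> m \<in> S \<and> (\<forall>x\<in>X. le m x) \<and>
     (\<forall>m'\<in>S. (\<forall>x\<in>X. le m' x) \<longrightarrow> le m' m)"

definition space_of_states :: "'s set \<Rightarrow> ('s \<Rightarrow> 's \<Rightarrow> bool) \<Rightarrow> bool" where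
  "space_of_states S le \<longleftrightarrow>
     (\<forall>x\<in>S. le x x) \<and>
     (\<forall>x\<in>S. \<forall>y\<in>S. le x y \<and> le y x \<longrightarrow> x = y) \<and>
     (\<forall>x\<in>S. \<forall>y\<in>S. \<forall>z\<in>S. le x y \<and> le y z \<longrightarrow> le x z) \<and>
     (\<exists>b\<in>S. \<forall>x\<in>S. le b x) \<and>
     (\<forall>X. X \<subseteq> S \<and> X \<noteq> {} \<longrightarrow> (\<exists>m. is_inf_of S le X m))"

definition bot_st :: "'s set \<Rightarrow> ('s \<Rightarrow> 's \<Rightarrow> bool) \<Rightarrow> 's" where
  "bot_st S le = (THE b. b \<in> S \<and> (\<forall>x\<in>S. le b x))"

text \<open>Formal symbol l_(a,b); None stands for the placeholder symbol.\<close>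
datatype 's eff = L "'s option" "'s option"

definition has_common_ub :: "'s set \<Rightarrow> ('s \<Rightarrow> 's \<Rightarrow> bool) \<Rightarrow> 's \<Rightarrow> 's \<Rightarrow> bool" where
  "has_common_ub S le x y \<longleftrightarrow> (\<exists>z\<in>S. le x z \<and> le y z)"

definition nat_effects :: "'s set \<Rightarrow> ('s \<Rightarrow> 's \<Rightarrow> bool) \<Rightarrow> 's eff set" where
  "nat_effects S le = {L a b | a b.
      (\<forall>x. a = Some x \<longrightarrow> x \<in> S) \<and> (\<forall>y. b = Some y \<longrightarrow> y \<in> S) \<and>
      (\<forall>x y. a = Some x \<and> b = Some y \<longrightarrow> \<not> has_common_ub S le x y)}"

fun eval :: "('s \<Rightarrow> 's \<Rightarrow> bool) \<Rightarrow> 's eff \<Rightarrow> 's \<Rightarrow> bdom" where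
  "eval le (L a b) \<sigma> =
     (if (\<exists>x. a = Some x \<and> le x \<sigma>) then BY
      else if (\<exists>y. b = Some y \<and> le y \<sigma>) then BN
      else BBot)"

definition eff_bar :: "'s eff \<Rightarrow> 's eff" where
  "eff_bar l = (case l of L a b \<Rightarrow> L b a)"

definition eff_Y :: "'s set \<Rightarrow> ('s \<Rightarrow> 's \<Rightarrow> bool) \<Rightarrow> 's eff" where
  "eff_Y S le = L (Some (bot_st S le)) None"

definition eff_bot :: "'s eff" where
  "eff_bot = L None None"

definition eff_is_inf :: "'s set \<Rightarrow> ('s \<Rightarrow> 's \<Rightarrow> bool) \<Rightarrow> 's eff set \<Rightarrow> 's eff \<Rightarrow> bool" where
  "eff_is_inf S le F l \<longleftrightarrow> (\<forall>\<sigma>\<in>S. eval le l \<sigma> = binf ((\<lambda>f. eval le f \<sigma>) ` F))"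

definition chu_space :: "'s set \<Rightarrow> ('s \<Rightarrow> 's \<Rightarrow> bool) \<Rightarrow> 's eff set \<Rightarrow> bool" where
  "chu_space S le E \<longleftrightarrow>
     space_of_states S le \<and>
     E \<subseteq> nat_effects S le \<and>
     (\<forall>\<sigma>\<in>S. \<sigma> \<noteq> bot_st S le \<longrightarrow>
        (\<exists>\<sigma>'\<in>S. \<sigma>' \<noteq> bot_st S le \<and> L (Some \<sigma>) (Some \<sigma>') \<in> E)) \<and>
     (\<forall>F. F \<subseteq> E \<and> F \<noteq> {} \<longrightarrow> (\<exists>l\<in>E. eff_is_inf S le F l)) \<and>
     (\<forall>l\<in>E. eff_bar l \<in> E) \<and>
     eff_Y S le \<in> E \<and> eff_bot \<in> E"

definition pure_tensor ::
  "('a \<Rightarrow> 'a \<Rightarrow> bool) \<Rightarrow> ('b \<Rightarrow> 'b \<Rightarrow> bool) \<Rightarrow> 'a \<Rightarrow> 'b \<Rightarrow> 'a eff \<Rightarrow> 'b eff \<Rightarrow> bdom" where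
  "pure_tensor leA leB \<sigma>A \<sigma>B lA lB = bprod (eval leA lA \<sigma>A) (eval leB lB \<sigma>B)"

definition min_tensor ::
  "'a set \<Rightarrow> ('a \<Rightarrow> 'a \<Rightarrow> bool) \<Rightarrow> 'a eff set \<Rightarrow>
   'b set \<Rightarrow> ('b \<Rightarrow> 'b \<Rightarrow> bool) \<Rightarrow> 'b eff set \<Rightarrow> ('a eff \<Rightarrow> 'b eff \<Rightarrow> bdom) set" where
  "min_tensor SA leA EA SB leB EB =
     {\<Phi>. \<exists>P. P \<subseteq> SA \<times> SB \<and> P \<noteq> {} \<and>
        (\<forall>lA\<in>EA. \<forall>lB\<in>EB.
           \<Phi> lA lB = binf ((\<lambda>(\<sigma>A, \<sigma>B). pure_tensor leA leB \<sigma>A \<sigma>B lA lB) ` P))}"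

end

theory Submission
  imports Defs
begin

lemma binf_Y_iff: "X \<noteq> {} \<Longrightarrow> binf X = BY \<longleftrightarrow> (\<forall>x\<in>X. x = BY)"
  unfolding binf_def by auto

lemma binf_N_iff: "X \<noteq> {} \<Longrightarrow> binf X = BN \<longleftrightarrow> (\<forall>x\<in>X. x = BN)"
  unfolding binf_def by auto

lemma bprod_Y: "bprod x y = BY \<longleftrightarrow> x = BY \<and> y = BY"
  by (cases x; cases y) auto

lemma bot_st_props:
  assumes "space_of_states S le"
  shows "bot_st S le \<in> S \<and> (\<forall>x\<in>S. le (bot_st S le) x)"
proof -
  have "\<exists>b\<in>S. \<forall>x\<in>S. le b x" using assms unfolding space_of_states_def by (elim conjE) assumption
  then obtain b where b: "b \<in> S" "\<forall>x\<in>S. le b x" by blast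
  have "\<exists>!b. b \<in> S \<and> (\<forall>x\<in>S. le b x)"
  proof (rule ex1I[of _ b])
    show "b \<in> S \<and> (\<forall>x\<in>S. le b x)" using b by blast
  next
    fix c assume c: "c \<in> S \<and> (\<forall>x\<in>S. le c x)"
    have anti: "\<forall>x\<in>S. \<forall>y\<in>S. le x y \<and> le y x \<longrightarrow> x = y"
      using assms unfolding space_of_states_def by (elim conjE) assumption
    have "le b c" "le c b" using b c by auto
    then show "c = b" using anti b(1) c by auto
  qed
  then show ?thesis unfolding bot_st_def by (rule theI')
qed

lemma bprod_N: "bprod x y = BN \<Longrightarrow> x \<noteq> BN \<Longrightarrow> y = BN"
  by (cases x; cases y) auto

lemma fin_cases: "a \<noteq> BY \<Longrightarrow> b \<noteq> BY \<Longrightarrow> \<not> (a = BN \<and> b = BN) \<Longrightarrow>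
  (a, b) \<in> {(BBot, BN), (BN, BBot), (BBot, BBot)}"
  by (cases a; cases b) auto

theorem mainTheorem20:
  fixes SA :: "'a set" and leA :: "'a \<Rightarrow> 'a \<Rightarrow> bool" and EA :: "'a eff set"
    and SB :: "'b set" and leB :: "'b \<Rightarrow> 'b \<Rightarrow> bool" and EB :: "'b eff set"
    and \<Phi> :: "'a eff \<Rightarrow> 'b eff \<Rightarrow> bdom"
    and lA :: "'a eff" and lB lB' :: "'b eff"
  assumes "chu_space SA leA EA"
    and "chu_space SB leB EB"
    and "\<Phi> \<in> min_tensor SA leA EA SB leB EB"
    and "lA \<in> EA"
    and "\<Phi> lA (eff_Y SB leB) = BBot"
    and "lB \<in> EB" and "lB' \<in> EB"
    and "\<forall>\<sigma>\<in>SB. binf {eval leB lB \<sigma>, eval leB lB' \<sigma>} = eval leB eff_bot \<sigma>"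
  shows "(\<Phi> lA lB, \<Phi> lA lB') \<in> {(BBot, BN), (BN, BBot), (BBot, BBot)}"
proof -
  obtain P where P: "P \<subseteq> SA \<times> SB" "P \<noteq> {}"
    and PE: "\<And>x y. x \<in> EA \<Longrightarrow> y \<in> EB \<Longrightarrow>
       \<Phi> x y = binf ((\<lambda>(\<sigma>A, \<sigma>B). pure_tensor leA leB \<sigma>A \<sigma>B x y) ` P)"
    using assms(3) unfolding min_tensor_def by blast
  have YE: "eff_Y SB leB \<in> EB" using assms(2) unfolding chu_space_def by blast
  have bs: "bot_st SB leB \<in> SB \<and> (\<forall>x\<in>SB. leB (bot_st SB leB) x)"
  proof -
    have "space_of_states SB leB" using assms(2) unfolding chu_space_def by simp
    then show ?thesis by (rule bot_st_props)
  qed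
  have evY: "\<And>b. b \<in> SB \<Longrightarrow> eval leB (eff_Y SB leB) b = BY"
    using bs unfolding eff_Y_def by auto
  have ne: "((\<lambda>(\<sigma>A, \<sigma>B). pure_tensor leA leB \<sigma>A \<sigma>B x y) ` P) \<noteq> {}" for x y
    using P by auto
  have "\<Phi> lA (eff_Y SB leB) \<noteq> BY" "\<Phi> lA (eff_Y SB leB) \<noteq> BN" using assms(5) by auto
  have PB: "\<And>a b. (a, b) \<in> P \<Longrightarrow> b \<in> SB" using P(1) by auto
  have eqY: "\<Phi> lA (eff_Y SB leB) = binf ((\<lambda>(a, b). eval leA lA a) ` P)"
    unfolding PE[OF assms(4) YE]
    by (rule arg_cong[where f=binf], rule image_cong, simp,
        auto simp: pure_tensor_def evY PB)
  have ne2: "(\<lambda>(a, b). eval leA lA a) ` P \<noteq> {}" using P by auto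
  obtain p where p: "p \<in> P" "eval leA lA (fst p) \<noteq> BY"
  proof -
    have "\<not> (\<forall>x\<in>(\<lambda>(a, b). eval leA lA a) ` P. x = BY)"
      using assms(5) eqY binf_Y_iff[OF ne2] by simp
    then show ?thesis using that by auto
  qed
  obtain q where q: "q \<in> P" "eval leA lA (fst q) \<noteq> BN"
  proof -
    have "\<not> (\<forall>x\<in>(\<lambda>(a, b). eval leA lA a) ` P. x = BN)"
      using assms(5) eqY binf_N_iff[OF ne2] by simp
    then show ?thesis using that by auto
  qed
  have notY: "\<Phi> lA l \<noteq> BY" if "l \<in> EB" for l
    unfolding PE[OF assms(4) that] binf_Y_iff[OF ne]
  proof -
    obtain a b where ab: "p = (a, b)" by (cases p)
    have "pure_tensor leA leB a b lA l \<noteq> BY" using p(2) ab by (simp add: pure_tensor_def bprod_Y)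
    moreover have "pure_tensor leA leB a b lA l \<in> (\<lambda>(\<sigma>A, \<sigma>B). pure_tensor leA leB \<sigma>A \<sigma>B lA l) ` P"
      using p(1) ab by force
    ultimately show "\<not> (\<forall>x\<in>(\<lambda>(\<sigma>A, \<sigma>B). pure_tensor leA leB \<sigma>A \<sigma>B lA l) ` P. x = BY)" by blast
  qed
  have botv: "\<And>\<sigma>. eval leB eff_bot \<sigma> = BBot" unfolding eff_bot_def by simp
  have qB: "snd q \<in> SB" using q P by auto
  have "\<not> (\<Phi> lA lB = BN \<and> \<Phi> lA lB' = BN)"
  proof
    assume h: "\<Phi> lA lB = BN \<and> \<Phi> lA lB' = BN"
    have allN: "bprod (eval leA lA (fst q)) (eval leB l (snd q)) = BN"
      if l1: "l \<in> EB" and l2: "\<Phi> lA l = BN" for l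
    proof -
      obtain a b where ab: "q = (a, b)" by (cases q)
      have mem: "pure_tensor leA leB a b lA l \<in> (\<lambda>(\<sigma>A, \<sigma>B). pure_tensor leA leB \<sigma>A \<sigma>B lA l) ` P"
        using q(1) ab by force
      have "\<forall>x\<in>(\<lambda>(\<sigma>A, \<sigma>B). pure_tensor leA leB \<sigma>A \<sigma>B lA l) ` P. x = BN"
        using l2 unfolding PE[OF assms(4) l1] binf_N_iff[OF ne] .
      then have "pure_tensor leA leB a b lA l = BN" using mem by blast
      then show ?thesis using ab by (simp add: pure_tensor_def)
    qed
    have "bprod (eval leA lA (fst q)) (eval leB lB (snd q)) = BN"
         "bprod (eval leA lA (fst q)) (eval leB lB' (snd q)) = BN"
      using h allN assms(6,7) by auto
    then have "eval leB lB (snd q) = BN" "eval leB lB' (snd q) = BN"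
      using q(2) bprod_N by blast+
    then have "binf {eval leB lB (snd q), eval leB lB' (snd q)} = BN" by (simp add: binf_def)
    moreover have "binf {eval leB lB (snd q), eval leB lB' (snd q)} = BBot"
      using bspec[OF assms(8) qB] botv by simp
    ultimately show False by simp
  qed
  then show ?thesis using notY[OF assms(6)] notY[OF assms(7)] by (rule fin_cases[rotated 2])
qed

end
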